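(* Let $n\equiv 2\pmod 4$ with $n\geqslant 6$. Then $\{x_1h_{n-1},\ x_2h_n,\ x_3,\ldots,x_n\}$ is a generating set of $\mathcal{AM}_n$ of minimum size. In particular, $\mathcal{AM}_n$ has rank $n$.
   Context: Let $\Omega_n=\{1<2<\cdots<n\}$ and $\mathcal{I}_n$ the monoid of all partial injective maps of $\Omega_n$, written on the right and composed left to right. $\mathcal{AI}_n$ is the set of all $\alpha\in\mathcal{I}_n$ with $\alpha=\sigma|_{\mathrm{Dom}(\alpha)}$ for some even permutation $\sigma$; $\mathcal{PMI}_n$ is the set of monotone (order-preserving or order-reversing) elements and $\mathcal{AM}_n=\mathcal{AI}_n\cap\mathcal{PMI}_n$. The rank of a monoid is the minimum size of a generating set. Let $X_i=\Omega_n\setminus\{i\}$. Define $x_1,\dots,x_n$ as the (unique) order-preserving partial permutations with: $x_1$: domain $X_1$, image $X_n$ if $n$ is odd and $X_{n-1}$ if $n$ is even; $x_2$: domain $X_2$, image $X_{n-1}$ if $n$ is odd and $X_n$ if $n$ is even; $x_i$ ($3\leqslant i\leqslant n$): domain $X_i$, image $X_{i-2}$. For $1\leqslant i\leqslant n$, $h_i$ is the unique order-reversing partial permutation with domain and image $X_i$ (the reverse of the partial identity on $X_i$). *)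

theory Defs
  imports "HOL-Combinatorics.Permutations"
begin

text \<open>Maps are written on the right and
  composed left to right: (pmult a b) x = b (a x).\<close>

type_synonym pmap = "nat \<Rightarrow> nat option"

definition Omega :: "nat \<Rightarrow> nat set" where
  "Omega n = {1..n}"

definition pmult :: "pmap \<Rightarrow> pmap \<Rightarrow> pmap" where
  "pmult a b = b \<circ>\<^sub>m a"

definition pid :: "nat \<Rightarrow> pmap" where
  "pid n = (\<lambda>x. if x \<in> Omega n then Some x else None)"

definition In :: "nat \<Rightarrow> pmap set" where
  "In n = {a. dom a \<subseteq> Omega n \<and> ran a \<subseteq> Omega n \<and> inj_on a (dom a)}"

definition AI :: "nat \<Rightarrow> pmap set" where
  "AI n = {a \<in> In n. \<exists>\<sigma>. \<sigma> permutes Omega n \<and> evenperm \<sigma> \<and>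
                         (\<forall>x\<in>dom a. a x = Some (\<sigma> x))}"

definition order_preserving :: "pmap \<Rightarrow> bool" where
  "order_preserving a \<longleftrightarrow>
     (\<forall>x\<in>dom a. \<forall>y\<in>dom a. x \<le> y \<longrightarrow> the (a x) \<le> the (a y))"

definition order_reversing :: "pmap \<Rightarrow> bool" where
  "order_reversing a \<longleftrightarrow>
     (\<forall>x\<in>dom a. \<forall>y\<in>dom a. x \<le> y \<longrightarrow> the (a y) \<le> the (a x))"

definition PMI :: "nat \<Rightarrow> pmap set" where
  "PMI n = {a \<in> In n. order_preserving a \<or> order_reversing a}"

definition AM :: "nat \<Rightarrow> pmap set" where
  "AM n = AI n \<inter> PMI n"

inductive_set gen :: "nat \<Rightarrow> pmap set \<Rightarrow> pmap set" for n A where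
  gen_id: "pid n \<in> gen n A"
| gen_base: "a \<in> A \<Longrightarrow> a \<in> gen n A"
| gen_mult: "a \<in> gen n A \<Longrightarrow> b \<in> gen n A \<Longrightarrow> pmult a b \<in> gen n A"

definition rank :: "nat \<Rightarrow> pmap set \<Rightarrow> nat" where
  "rank n M = (LEAST k. \<exists>A. A \<subseteq> M \<and> finite A \<and> card A = k \<and> gen n A = M)"

definition Xs :: "nat \<Rightarrow> nat \<Rightarrow> nat set" where
  "Xs n i = Omega n - {i}"

definition op_map :: "nat \<Rightarrow> nat set \<Rightarrow> nat set \<Rightarrow> pmap" where
  "op_map n D R = (THE a. a \<in> In n \<and> dom a = D \<and> ran a = R \<and> order_preserving a)"

definition or_map :: "nat \<Rightarrow> nat set \<Rightarrow> nat set \<Rightarrow> pmap" where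
  "or_map n D R = (THE a. a \<in> In n \<and> dom a = D \<and> ran a = R \<and> order_reversing a)"

definition xg :: "nat \<Rightarrow> nat \<Rightarrow> pmap" where
  "xg n i =
     (if i = 1 then op_map n (Xs n 1) (if odd n then Xs n n else Xs n (n - 1))
      else if i = 2 then op_map n (Xs n 2) (if odd n then Xs n (n - 1) else Xs n n)
      else op_map n (Xs n i) (Xs n (i - 2)))"

definition hg :: "nat \<Rightarrow> nat \<Rightarrow> pmap" where
  "hg n i = or_map n (Xs n i) (Xs n i)"

end

theory Submission
  imports Defs
begin


definition sh :: "nat \<Rightarrow> nat \<Rightarrow> nat \<Rightarrow> nat" where
  "sh i j x = (if i < j \<and> i < x \<and> x \<le> j then x - 1
               else if j < i \<and> j \<le> x \<and> x < i then x + 1 else x)"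

definition cyc :: "nat \<Rightarrow> nat \<Rightarrow> nat \<Rightarrow> nat" where
  "cyc i j x = (if x = i then j else sh i j x)"

definition rvab :: "nat \<Rightarrow> nat \<Rightarrow> nat \<Rightarrow> nat" where
  "rvab a b x = (if a \<le> x \<and> x \<le> b then a + b - x else x)"

lemma cyc_same: "cyc i i = id"
  by (rule ext) (simp add: cyc_def sh_def)

lemma cyc_up: "i \<le> j \<Longrightarrow> cyc i (Suc j) = transpose j (Suc j) \<circ> cyc i j"
  by (rule ext) (auto simp: cyc_def sh_def transpose_def)

lemma cyc_down: "Suc j \<le> i \<Longrightarrow> cyc i j = transpose j (Suc j) \<circ> cyc i (Suc j)"
  by (rule ext) (auto simp: cyc_def sh_def transpose_def)

lemma perm_step:
  assumes "c permutes S" "finite S" "a \<in> S" "b \<in> S" "a \<noteq> b"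
  shows "transpose a b \<circ> c permutes S \<and> (evenperm (transpose a b \<circ> c) \<longleftrightarrow> \<not> evenperm c)"
proof -
  have t: "transpose a b permutes S" using assms by (intro permutes_swap_id)
  have p: "permutation c" "permutation (transpose a b)"
    using assms t permutation_permutes by blast+
  have "evenperm (transpose a b \<circ> c) = (evenperm (transpose a b) = evenperm c)"
    by (rule evenperm_comp[OF p(2) p(1)])
  moreover have "evenperm (transpose a b) = False" by (simp add: evenperm_swap assms(5))
  ultimately show ?thesis using permutes_compose[OF assms(1) t] by blast
qed

lemma cyc_perm_up:
  "i \<in> {1..n} \<Longrightarrow> i + d \<in> {1..n} \<Longrightarrow>
   cyc i (i + d) permutes {1..n} \<and> (evenperm (cyc i (i + d)) \<longleftrightarrow> even d)"
proof (induction d)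
  case 0 then show ?case by (simp add: cyc_same permutes_id[unfolded id_def])
next
  case (Suc d)
  have IH: "cyc i (i + d) permutes {1..n} \<and> (evenperm (cyc i (i + d)) \<longleftrightarrow> even d)"
    using Suc by auto
  have e: "cyc i (i + Suc d) = transpose (i+d) (Suc (i+d)) \<circ> cyc i (i + d)"
    using cyc_up[of i "i+d"] by simp
  have "transpose (i+d) (Suc (i+d)) \<circ> cyc i (i + d) permutes {1..n} \<and>
     (evenperm (transpose (i+d) (Suc (i+d)) \<circ> cyc i (i + d)) \<longleftrightarrow> \<not> evenperm (cyc i (i + d)))"
    using Suc.prems IH by (intro perm_step) auto
  then show ?case unfolding e using IH even_Suc by blast
qed

lemma cyc_perm_down:
  "j \<in> {1..n} \<Longrightarrow> j + d \<in> {1..n} \<Longrightarrow>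
   cyc (j + d) j permutes {1..n} \<and> (evenperm (cyc (j + d) j) \<longleftrightarrow> even d)"
proof (induction d arbitrary: j)
  case 0 then show ?case by (simp add: cyc_same permutes_id[unfolded id_def])
next
  case (Suc d)
  have IH: "cyc (Suc j + d) (Suc j) permutes {1..n} \<and> (evenperm (cyc (Suc j + d) (Suc j)) \<longleftrightarrow> even d)"
    using Suc.IH[of "Suc j"] Suc.prems by auto
  have e: "cyc (j + Suc d) j = transpose j (Suc j) \<circ> cyc (Suc j + d) (Suc j)"
    using cyc_down[of j "j + Suc d"] by simp
  have "transpose j (Suc j) \<circ> cyc (Suc j + d) (Suc j) permutes {1..n} \<and>
     (evenperm (transpose j (Suc j) \<circ> cyc (Suc j + d) (Suc j)) \<longleftrightarrow> \<not> evenperm (cyc (Suc j + d) (Suc j)))"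
    using Suc.prems IH by (intro perm_step) auto
  then show ?case unfolding e using IH even_Suc by blast
qed

lemma cyc_perm:
  assumes "i \<in> {1..n}" "j \<in> {1..n}"
  shows "cyc i j permutes {1..n} \<and> (evenperm (cyc i j) \<longleftrightarrow> even (i + j))"
proof (cases "i \<le> j")
  case True
  then obtain d where "j = i + d" using le_Suc_ex by blast
  then show ?thesis using cyc_perm_up[of i n d] assms by auto
next
  case False
  then obtain d where "i = j + d" using le_Suc_ex[of j i] by auto
  then show ?thesis using cyc_perm_down[of j n d] assms by auto
qed

lemma rvab_empty: "b < a \<Longrightarrow> rvab a b = id"
  by (rule ext) (auto simp: rvab_def)

lemma rvab_step: "a < b \<Longrightarrow> rvab a b = transpose a b \<circ> rvab (Suc a) (b - 1)"
  by (rule ext) (auto simp: rvab_def transpose_def)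

lemma rvab_perm:
  "rvab a (a + d) permutes {a..a+d} \<and> (evenperm (rvab a (a + d)) \<longleftrightarrow> even ((d + 1) div 2))"
proof (induction d arbitrary: a rule: less_induct)
  case (less d)
  show ?case
  proof (cases "d = 0")
    case True
    have "rvab a a = id" by (rule ext) (auto simp: rvab_def)
    then show ?thesis using True by (simp add: permutes_id[unfolded id_def])
  next
    case False
    show ?thesis
    proof (cases "d = 1")
      case True
      have "rvab a (a + 1) = transpose a (a+1)" by (rule ext) (auto simp: rvab_def transpose_def)
      then show ?thesis using True by (simp add: permutes_swap_id evenperm_swap)
    next
      case F1: False
      define e where "e = d - 2"
      have d: "d = e + 2" using False F1 e_def by simp
      have IH: "rvab (Suc a) (Suc a + e) permutes {Suc a..Suc a + e} \<and>
            (evenperm (rvab (Suc a) (Suc a + e)) \<longleftrightarrow> even ((e + 1) div 2))"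
        using less.IH[of e "Suc a"] d by auto
      have e1: "rvab a (a + d) = transpose a (a+d) \<circ> rvab (Suc a) (Suc a + e)"
        using rvab_step[of a "a+d"] d by simp
      have p1: "rvab (Suc a) (Suc a + e) permutes {a..a+d}"
        using IH[THEN conjunct1] by (rule permutes_subset) (auto simp: d)
      have "transpose a (a+d) \<circ> rvab (Suc a) (Suc a + e) permutes {a..a+d} \<and>
         (evenperm (transpose a (a+d) \<circ> rvab (Suc a) (Suc a + e)) \<longleftrightarrow> \<not> evenperm (rvab (Suc a) (Suc a + e)))"
        using p1 False by (intro perm_step) auto
      moreover have "even ((d + 1) div 2) \<longleftrightarrow> \<not> even ((e + 1) div 2)" using d by simp
      ultimately show ?thesis unfolding e1 using IH by blast
    qed
  qed
qed

definition rv :: "nat \<Rightarrow> nat \<Rightarrow> nat" where "rv n = rvab 1 n"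

lemma rv_perm: "n \<ge> 1 \<Longrightarrow> rv n permutes {1..n} \<and> (evenperm (rv n) \<longleftrightarrow> even (n div 2))"
  using rvab_perm[of 1 "n - 1"] by (simp add: rv_def)



definition sinc :: "nat set \<Rightarrow> (nat \<Rightarrow> nat) \<Rightarrow> bool" where
  "sinc D f \<longleftrightarrow> (\<forall>x\<in>D. \<forall>y\<in>D. x < y \<longrightarrow> f x < f y)"
definition sdec :: "nat set \<Rightarrow> (nat \<Rightarrow> nat) \<Rightarrow> bool" where
  "sdec D f \<longleftrightarrow> (\<forall>x\<in>D. \<forall>y\<in>D. x < y \<longrightarrow> f y < f x)"

lemma sinc_inj: "sinc D f \<Longrightarrow> inj_on f D"
  unfolding sinc_def inj_on_def by (metis less_irrefl nat_neq_iff)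

lemma inc_unique:
  assumes "finite D" "sinc D f" "sinc D g" "f ` D = g ` D"
  shows "\<forall>x\<in>D. f x = g x"
  using assms
proof (induction "card D" arbitrary: D)
  case 0 then show ?case by simp
next
  case (Suc c)
  then have ne: "D \<noteq> {}" by auto
  define m where "m = Max D"
  have mD: "m \<in> D" using Suc.prems ne m_def by simp
  have le: "\<forall>y\<in>D. y \<le> m" using Suc.prems m_def by simp
  have sf: "sinc D f" and sg: "sinc D g" and fin: "finite D" using Suc.prems by auto
  have fle: "\<forall>y\<in>D. f y \<le> f m"
  proof
    fix y assume y: "y \<in> D"
    then have "y < m \<or> y = m" using le by auto
    then show "f y \<le> f m" using sf mD y unfolding sinc_def by (metis less_imp_le order_refl)
  qed
  have gle: "\<forall>y\<in>D. g y \<le> g m"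
  proof
    fix y assume y: "y \<in> D"
    then have "y < m \<or> y = m" using le by auto
    then show "g y \<le> g m" using sg mD y unfolding sinc_def by (metis less_imp_le order_refl)
  qed
  have fm: "Max (f ` D) = f m" by (rule Max_eqI) (use fin fle mD in auto)
  have gm: "Max (g ` D) = g m" by (rule Max_eqI) (use fin gle mD in auto)
  have fgm: "f m = g m" using fm gm Suc.prems(4) by metis
  have "f ` (D - {m}) = f ` D - {f m}"
    using sinc_inj[OF Suc.prems(2)] mD by (simp add: inj_on_image_set_diff)
  moreover have "g ` (D - {m}) = g ` D - {g m}"
    using sinc_inj[OF Suc.prems(3)] mD by (simp add: inj_on_image_set_diff)
  ultimately have img: "f ` (D - {m}) = g ` (D - {m})" using fgm Suc.prems by simp
  have "\<forall>x\<in>D - {m}. f x = g x"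
    using Suc.hyps(1)[of "D - {m}"] Suc.hyps(2) Suc.prems mD img
    by (auto simp: sinc_def)
  then show ?case using fgm by blast
qed

lemma dec_unique:
  assumes "finite D" "sdec D f" "sdec D g" "f ` D = g ` D"
  shows "\<forall>x\<in>D. f x = g x"
proof -
  define K where "K = Max (f ` D)"
  have fK: "\<forall>x\<in>D. f x \<le> K" unfolding K_def using assms(1) by simp
  have gK: "\<forall>x\<in>D. g x \<le> K" unfolding K_def assms(4) using assms(1) by simp
  have "sinc D (\<lambda>x. K - f x)" using assms(2) fK unfolding sinc_def sdec_def
    by (meson diff_less_mono2 order_less_le_trans)
  moreover have "sinc D (\<lambda>x. K - g x)" using assms(3) gK unfolding sinc_def sdec_def
    by (meson diff_less_mono2 order_less_le_trans)
  moreover have "(\<lambda>x. K - f x) ` D = (\<lambda>x. K - g x) ` D"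
  proof -
    have "(\<lambda>x. K - f x) ` D = (\<lambda>v. K - v) ` (f ` D)" by (simp add: image_image)
    also have "\<dots> = (\<lambda>v. K - v) ` (g ` D)" using assms(4) by simp
    finally show ?thesis by (simp add: image_image)
  qed
  ultimately have "\<forall>x\<in>D. K - f x = K - g x" using inc_unique assms(1) by blast
  then show ?thesis using fK gK by (metis diff_diff_cancel)
qed

lemma pmult_apply: "pmult a b x = (case a x of None \<Rightarrow> None | Some y \<Rightarrow> b y)"
  by (simp add: pmult_def map_comp_def)

lemma dom_pmult: "dom (pmult a b) = {x \<in> dom a. the (a x) \<in> dom b}"
  by (auto simp: dom_def pmult_apply split: option.splits)

lemma pmult_the: "x \<in> dom (pmult a b) \<Longrightarrow> the (pmult a b x) = the (b (the (a x)))"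
  by (auto simp: dom_def pmult_apply split: option.splits)

lemma dom_pmult_eq: "ran a \<subseteq> dom b \<Longrightarrow> dom (pmult a b) = dom a"
  by (auto simp: dom_pmult ran_def)

lemma ran_pmult_eq: "ran a = dom b \<Longrightarrow> ran (pmult a b) = ran b"
proof
  show "ran (pmult a b) \<subseteq> ran b"
  proof
    fix z assume "z \<in> ran (pmult a b)"
    then obtain x where "pmult a b x = Some z" by (auto simp: ran_def)
    then obtain y where "b y = Some z" by (auto simp: pmult_apply split: option.splits)
    then show "z \<in> ran b" by (auto simp: ran_def)
  qed
next
  assume h: "ran a = dom b"
  show "ran b \<subseteq> ran (pmult a b)"
  proof
    fix z assume "z \<in> ran b"
    then obtain y where y: "b y = Some z" by (auto simp: ran_def)
    then have "y \<in> ran a" using h by auto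
    then obtain x where "a x = Some y" by (auto simp: ran_def)
    then have "pmult a b x = Some z" using y by (simp add: pmult_apply)
    then show "z \<in> ran (pmult a b)" by (auto simp: ran_def)
  qed
qed

lemma In_finite: "a \<in> In n \<Longrightarrow> finite (dom a)"
  unfolding In_def Omega_def by (auto intro: finite_subset)

lemma pmult_In: "a \<in> In n \<Longrightarrow> b \<in> In n \<Longrightarrow> pmult a b \<in> In n"
proof -
  assume a: "a \<in> In n" and b: "b \<in> In n"
  have "dom (pmult a b) \<subseteq> dom a" by (auto simp: dom_pmult)
  then have 1: "dom (pmult a b) \<subseteq> Omega n" using a by (auto simp: In_def)
  have "ran (pmult a b) \<subseteq> ran b"
  proof
    fix z assume "z \<in> ran (pmult a b)"
    then obtain x where "pmult a b x = Some z" by (auto simp: ran_def)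
    then obtain y where "b y = Some z" by (auto simp: pmult_apply split: option.splits)
    then show "z \<in> ran b" by (auto simp: ran_def)
  qed
  then have 2: "ran (pmult a b) \<subseteq> Omega n" using b by (auto simp: In_def)
  have 3: "inj_on (pmult a b) (dom (pmult a b))"
  proof (rule inj_onI)
    fix x y assume x: "x \<in> dom (pmult a b)" and y: "y \<in> dom (pmult a b)"
      and e: "pmult a b x = pmult a b y"
    obtain u where u: "a x = Some u" "u \<in> dom b" using x unfolding dom_pmult by (metis (mono_tags, lifting) domD mem_Collect_eq option.sel)
    obtain v where v: "a y = Some v" "v \<in> dom b" using y unfolding dom_pmult by (metis (mono_tags, lifting) domD mem_Collect_eq option.sel)
    have "b u = b v" using e u v by (simp add: pmult_apply)
    then have "u = v" using b u v by (auto simp: In_def inj_on_def)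
    then have "a x = a y" using u v by simp
    moreover have "x \<in> dom a" "y \<in> dom a" using u v by auto
    ultimately show "x = y" using a by (auto simp: In_def inj_on_def)
  qed
  show ?thesis using 1 2 3 by (simp add: In_def)
qed

lemma op_comp_pp: "order_preserving a \<Longrightarrow> order_preserving b \<Longrightarrow> order_preserving (pmult a b)"
  unfolding order_preserving_def
  by (auto simp: pmult_the dom_pmult simp del: pmult_def)



lemma op_comp_pr: "order_preserving a \<Longrightarrow> order_reversing b \<Longrightarrow> order_reversing (pmult a b)"
  unfolding order_preserving_def order_reversing_def
  by (auto simp: pmult_the dom_pmult simp del: pmult_def)

lemma op_comp_rp: "order_reversing a \<Longrightarrow> order_preserving b \<Longrightarrow> order_reversing (pmult a b)"
  unfolding order_preserving_def order_reversing_def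
  by (auto simp: pmult_the dom_pmult simp del: pmult_def)

lemma op_comp_rr: "order_reversing a \<Longrightarrow> order_reversing b \<Longrightarrow> order_preserving (pmult a b)"
  unfolding order_preserving_def order_reversing_def
  by (auto simp: pmult_the dom_pmult simp del: pmult_def)

lemma In_the_inj: "a \<in> In n \<Longrightarrow> x \<in> dom a \<Longrightarrow> y \<in> dom a \<Longrightarrow> the (a x) = the (a y) \<Longrightarrow> x = y"
proof -
  assume a: "a \<in> In n" and x: "x \<in> dom a" and y: "y \<in> dom a" and e: "the (a x) = the (a y)"
  obtain u where u: "a x = Some u" using x by blast
  obtain v where v: "a y = Some v" using y by blast
  have "a x = a y" using u v e by simp
  then show "x = y" using a x y unfolding In_def inj_on_def by blast
qed

lemma op_sinc: "a \<in> In n \<Longrightarrow> order_preserving a \<Longrightarrow> sinc (dom a) (\<lambda>x. the (a x))"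
  unfolding sinc_def order_preserving_def
  by (metis In_the_inj le_neq_implies_less less_imp_le less_irrefl)

lemma or_sdec: "a \<in> In n \<Longrightarrow> order_reversing a \<Longrightarrow> sdec (dom a) (\<lambda>x. the (a x))"
  unfolding sdec_def order_reversing_def
  by (metis In_the_inj le_neq_implies_less less_imp_le less_irrefl)

lemma ran_the: "ran a = (\<lambda>x. the (a x)) ` dom a"
  by (force simp: ran_def dom_def)

lemma eq_on_dom:
  assumes "dom a = dom b" "\<forall>x\<in>dom a. the (a x) = the (b x)"
  shows "a = b"
proof (rule ext)
  fix x show "a x = b x"
  proof (cases "x \<in> dom a")
    case True then show ?thesis using assms by (metis domD option.sel)
  next
    case False then show ?thesis using assms by (metis domIff)
  qed
qed

lemma op_unique:
  assumes "a \<in> In n" "b \<in> In n" "dom a = dom b" "ran a = ran b"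
    "order_preserving a" "order_preserving b"
  shows "a = b"
proof -
  have "\<forall>x\<in>dom a. the (a x) = the (b x)"
    using inc_unique[OF In_finite[OF assms(1)] op_sinc[OF assms(1,5)]] op_sinc[OF assms(2,6)]
      assms(3,4) ran_the[of a] ran_the[of b] by metis
  then show ?thesis using eq_on_dom assms(3) by blast
qed

lemma or_unique:
  assumes "a \<in> In n" "b \<in> In n" "dom a = dom b" "ran a = ran b"
    "order_reversing a" "order_reversing b"
  shows "a = b"
proof -
  have "\<forall>x\<in>dom a. the (a x) = the (b x)"
    using dec_unique[OF In_finite[OF assms(1)] or_sdec[OF assms(1,5)]] or_sdec[OF assms(2,6)]
      assms(3,4) ran_the[of a] ran_the[of b] by metis
  then show ?thesis using eq_on_dom assms(3) by blast
qed

lemma perm_img_minus: "s permutes S \<Longrightarrow> s ` (S - {i}) = S - {s i}"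
  by (metis image_empty image_insert image_set_diff permutes_image permutes_inj)

lemma perm_agree:
  assumes "s permutes S" "t permutes S" "i \<in> S" "\<forall>x\<in>S - {i}. s x = t x"
  shows "s = t"
proof (rule ext)
  fix x
  have "s ` (S - {i}) = t ` (S - {i})" using assms(4) by auto
  then have "S - {s i} = S - {t i}" using perm_img_minus assms(1,2) by metis
  moreover have "s i \<in> S" "t i \<in> S" using assms permutes_in_image by metis+
  ultimately have "s i = t i" by blast
  then show "s x = t x"
    using assms by (cases "x \<in> S") (auto simp: permutes_not_in)
qed

lemma sh_cyc: "x \<noteq> i \<Longrightarrow> sh i j x = cyc i j x"
  by (simp add: cyc_def)

lemma sh_mono:
  assumes "x \<noteq> i" "y \<noteq> i" "x < y" shows "sh i j x < sh i j y"
proof (cases "i < j")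
  case True
  then show ?thesis using assms unfolding sh_def
    by (cases "i < x"; cases "x \<le> j"; cases "i < y"; cases "y \<le> j"; simp)
next
  case False
  then show ?thesis using assms unfolding sh_def
    by (cases "j < i"; cases "j \<le> x"; cases "x < i"; cases "j \<le> y"; cases "y < i"; simp)
qed

definition pm :: "nat \<Rightarrow> nat \<Rightarrow> nat \<Rightarrow> pmap" where
  "pm n i j = (\<lambda>x. if x \<in> Xs n i then Some (sh i j x) else None)"

definition rm :: "nat \<Rightarrow> nat \<Rightarrow> nat \<Rightarrow> pmap" where
  "rm n i j = (\<lambda>x. if x \<in> Xs n i then Some (rv n (sh i (n + 1 - j) x)) else None)"

definition E :: "nat \<Rightarrow> nat \<Rightarrow> nat \<Rightarrow> bool \<Rightarrow> pmap" where
  "E n i j s = (if s then rm n i j else pm n i j)"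

lemma rv_val: "x \<in> {1..n} \<Longrightarrow> rv n x = n + 1 - x"
  by (auto simp: rv_def rvab_def)

lemma sh_img:
  assumes "i \<in> {1..n}" "j \<in> {1..n}"
  shows "sh i j ` ({1..n} - {i}) = {1..n} - {j}"
proof -
  have "sh i j ` ({1..n} - {i}) = cyc i j ` ({1..n} - {i})"
    by (auto simp: sh_cyc image_def)
  also have "\<dots> = {1..n} - {cyc i j i}"
    by (rule perm_img_minus[OF conjunct1[OF cyc_perm[OF assms]]])
  finally show ?thesis by (simp add: cyc_def)
qed

lemma pm_props:
  assumes "i \<in> Omega n" "j \<in> Omega n"
  shows "pm n i j \<in> In n \<and> dom (pm n i j) = Xs n i \<and> ran (pm n i j) = Xs n j
         \<and> order_preserving (pm n i j)"
proof -
  have d: "dom (pm n i j) = Xs n i" by (auto simp: pm_def dom_def)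
  have "ran (pm n i j) = (\<lambda>x. the (pm n i j x)) ` Xs n i" using ran_the d by metis
  also have "\<dots> = sh i j ` Xs n i" by (rule image_cong) (auto simp: pm_def)
  also have "\<dots> = Xs n j" using sh_img[of i n j] assms by (simp add: Xs_def Omega_def)
  finally have r: "ran (pm n i j) = Xs n j" .
  have inj: "inj_on (pm n i j) (dom (pm n i j))"
  proof (rule inj_onI)
    fix x y assume x: "x \<in> dom (pm n i j)" and y: "y \<in> dom (pm n i j)" and e: "pm n i j x = pm n i j y"
    have xi: "x \<in> Xs n i" and yi: "y \<in> Xs n i" using x y d by auto
    then have se: "sh i j x = sh i j y" using e by (simp add: pm_def)
    have "x \<noteq> i" "y \<noteq> i" using xi yi by (auto simp: Xs_def)
    then show "x = y" using se sh_mono[of x i y j] sh_mono[of y i x j]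
      by (metis linorder_neqE_nat less_irrefl)
  qed
  have "order_preserving (pm n i j)"
    unfolding order_preserving_def d by (auto simp: pm_def Xs_def dest: sh_mono[of _ i _ j] simp: order.order_iff_strict)
  then show ?thesis using d r inj by (auto simp: In_def Xs_def)
qed



lemma sh_inj: "x \<noteq> i \<Longrightarrow> y \<noteq> i \<Longrightarrow> sh i j x = sh i j y \<Longrightarrow> x = y"
  using sh_mono[of x i y j] sh_mono[of y i x j] by (metis linorder_neqE_nat less_irrefl)

lemma sh_in: "i \<in> {1..n} \<Longrightarrow> j \<in> {1..n} \<Longrightarrow> x \<in> {1..n} - {i} \<Longrightarrow> sh i j x \<in> {1..n} - {j}"
  using sh_img[of i n j] by blast

lemma rm_props:
  assumes "i \<in> Omega n" "j \<in> Omega n"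
  shows "rm n i j \<in> In n \<and> dom (rm n i j) = Xs n i \<and> ran (rm n i j) = Xs n j
         \<and> order_reversing (rm n i j)"
proof -
  define j' where "j' = n + 1 - j"
  have j': "j' \<in> {1..n}" using assms by (auto simp: j'_def Omega_def)
  have rj: "rv n j' = j" using j' assms by (simp add: rv_val j'_def Omega_def)
  have rvp: "rv n permutes {1..n}" using rv_perm[of n] assms by (auto simp: Omega_def)
  have i: "i \<in> {1..n}" using assms by (simp add: Omega_def)
  have d: "dom (rm n i j) = Xs n i" by (auto simp: rm_def dom_def)
  have "ran (rm n i j) = (\<lambda>x. the (rm n i j x)) ` Xs n i" using ran_the d by metis
  also have "\<dots> = rv n ` (sh i j' ` Xs n i)" by (auto simp: rm_def j'_def image_def)
  also have "sh i j' ` Xs n i = {1..n} - {j'}" using sh_img[OF i j'] by (simp add: Xs_def Omega_def)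
  also have "rv n ` ({1..n} - {j'}) = {1..n} - {j}" using perm_img_minus[OF rvp] rj by metis
  finally have r: "ran (rm n i j) = Xs n j" by (simp add: Xs_def Omega_def)
  have inj: "inj_on (rm n i j) (dom (rm n i j))"
  proof (rule inj_onI)
    fix x y assume x: "x \<in> dom (rm n i j)" and y: "y \<in> dom (rm n i j)" and e: "rm n i j x = rm n i j y"
    have xi: "x \<in> Xs n i" and yi: "y \<in> Xs n i" using x y d by auto
    then have "rv n (sh i j' x) = rv n (sh i j' y)" using e by (simp add: rm_def j'_def)
    then have se: "sh i j' x = sh i j' y" using permutes_inj[OF rvp] by (meson injD)
    have "x \<noteq> i" "y \<noteq> i" using xi yi by (auto simp: Xs_def)
    then show "x = y" using se sh_inj by blast
  qed
  have "order_reversing (rm n i j)"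
    unfolding order_reversing_def d
  proof (intro ballI impI)
    fix x y assume x: "x \<in> Xs n i" and y: "y \<in> Xs n i" and le: "x \<le> y"
    have sx: "sh i j' x \<in> {1..n}" and sy: "sh i j' y \<in> {1..n}"
      using sh_in[OF i j'] x y by (auto simp: Xs_def Omega_def)
    have "sh i j' x \<le> sh i j' y"
      using le sh_mono[of x i y j'] x y by (cases "x = y") (auto simp: Xs_def)
    then show "the (rm n i j y) \<le> the (rm n i j x)"
    proof -
      have "the (rm n i j x) = rv n (sh i j' x)" "the (rm n i j y) = rv n (sh i j' y)"
        using x y by (simp_all add: rm_def j'_def)
      moreover have "rv n (sh i j' x) = n + 1 - sh i j' x" "rv n (sh i j' y) = n + 1 - sh i j' y"
        using sx sy rv_val by blast+
      ultimately show ?thesis using \<open>sh i j' x \<le> sh i j' y\<close> sy by simp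
    qed
  qed
  then show ?thesis using d r inj by (auto simp: In_def Xs_def)
qed

lemma E_props:
  assumes "i \<in> Omega n" "j \<in> Omega n"
  shows "E n i j s \<in> In n \<and> dom (E n i j s) = Xs n i \<and> ran (E n i j s) = Xs n j
         \<and> (if s then order_reversing (E n i j s) else order_preserving (E n i j s))"
  using pm_props[OF assms] rm_props[OF assms] by (simp add: E_def)

lemma E_comp:
  assumes "i \<in> Omega n" "j \<in> Omega n" "k \<in> Omega n"
  shows "pmult (E n i j s) (E n j k t) = E n i k (s \<noteq> t)"
proof -
  note A = E_props[OF assms(1,2), of s]
  note B = E_props[OF assms(2,3), of t]
  note C = E_props[OF assms(1,3), of "s \<noteq> t"]
  have In: "pmult (E n i j s) (E n j k t) \<in> In n" using A B pmult_In by blast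
  have d: "dom (pmult (E n i j s) (E n j k t)) = Xs n i" using A B dom_pmult_eq by simp
  have r: "ran (pmult (E n i j s) (E n j k t)) = Xs n k" using A B ran_pmult_eq by simp
  show ?thesis
  proof (cases "s \<noteq> t")
    case True
    have "order_reversing (pmult (E n i j s) (E n j k t))"
      using A B True op_comp_pr op_comp_rp by (cases s) auto
    then show ?thesis using or_unique[OF In _ _ _ _] C d r True by (metis (full_types))
  next
    case False
    have "order_preserving (pmult (E n i j s) (E n j k t))"
      using A B False op_comp_pp op_comp_rr by (cases s) auto
    then show ?thesis using op_unique[OF In _ _ _ _] C d r False by (metis (full_types))
  qed
qed



lemma rv_odd: "n mod 4 = 2 \<Longrightarrow> rv n permutes {1..n} \<and> \<not> evenperm (rv n)"
proof -
  assume n: "n mod 4 = 2"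
  then have "n \<ge> 1" "odd (n div 2)" by presburger+
  then show ?thesis using rv_perm[of n] by simp
qed

lemma rv_rv: "x \<in> {1..n} \<Longrightarrow> rv n (rv n x) = x"
proof -
  assume x: "x \<in> {1..n}"
  then have "n + 1 - x \<in> {1..n}" by auto
  then show ?thesis using x rv_val by simp
qed

lemma perm_fin: "s permutes {1..(n::nat)} \<Longrightarrow> permutation s"
  using permutation_permutes by blast

lemma E_AM:
  assumes n: "n mod 4 = 2" and ij: "i \<in> Omega n" "j \<in> Omega n" "even (i + j)"
  shows "E n i j s \<in> AM n"
proof -
  note P = E_props[OF ij(1,2), of s]
  have pmi: "E n i j s \<in> PMI n" using P by (auto simp: PMI_def split: if_splits)
  have i: "i \<in> {1..n}" and j: "j \<in> {1..n}" using ij by (auto simp: Omega_def)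
  have "\<exists>\<sigma>. \<sigma> permutes Omega n \<and> evenperm \<sigma> \<and> (\<forall>x\<in>dom (E n i j s). E n i j s x = Some (\<sigma> x))"
  proof (cases s)
    case False
    have "\<forall>x\<in>dom (E n i j s). E n i j s x = Some (cyc i j x)"
      using P False by (auto simp: E_def pm_def Xs_def cyc_def)
    then show ?thesis using cyc_perm[OF i j] ij(3) by (auto simp: Omega_def)
  next
    case True
    define j' where "j' = n + 1 - j"
    have j': "j' \<in> {1..n}" using j by (auto simp: j'_def)
    have jle: "j \<le> n" using j by simp
    have par: "odd (i + j')" unfolding j'_def using ij(3) n jle by presburger
    have c: "cyc i j' permutes {1..n}" "\<not> evenperm (cyc i j')"
      using cyc_perm[OF i j'] par by auto
    have r: "rv n permutes {1..n}" "\<not> evenperm (rv n)" using rv_odd n by auto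
    have "evenperm (rv n \<circ> cyc i j')"
      using evenperm_comp[OF perm_fin[OF r(1)] perm_fin[OF c(1)]] c r by simp
    moreover have "rv n \<circ> cyc i j' permutes {1..n}" using permutes_compose[OF c(1) r(1)] .
    moreover have "\<forall>x\<in>dom (E n i j s). E n i j s x = Some ((rv n \<circ> cyc i j') x)"
      using P True by (auto simp: E_def rm_def Xs_def cyc_def j'_def)
    ultimately show ?thesis by (auto simp: Omega_def)
  qed
  then have "E n i j s \<in> AI n" using P by (simp add: AI_def)
  then show ?thesis using pmi by (simp add: AM_def)
qed

lemma card_ran: "a \<in> In n \<Longrightarrow> card (ran a) = card (dom a)"
  using ran_the[of a] card_image[of "\<lambda>x. the (a x)" "dom a"] In_the_inj[of a n]
  by (metis inj_onI)

lemma AM_In: "a \<in> AM n \<Longrightarrow> a \<in> In n"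
  by (simp add: AM_def AI_def)

lemma pid_props: "pid n \<in> In n \<and> dom (pid n) = Omega n \<and> ran (pid n) = Omega n \<and> order_preserving (pid n)"
  by (auto simp: pid_def In_def dom_def ran_def order_preserving_def inj_on_def split: if_splits)

lemma AM_full:
  assumes n: "n mod 4 = 2" and a: "a \<in> AM n" and d: "dom a = Omega n"
  shows "a = pid n"
proof -
  have In: "a \<in> In n" using a AM_In by blast
  have "ran a \<subseteq> Omega n" using In by (simp add: In_def)
  moreover have "card (ran a) = card (Omega n)" using card_ran[OF In] d by simp
  ultimately have r: "ran a = Omega n" by (simp add: card_subset_eq Omega_def)
  have "order_preserving a \<or> order_reversing a" using a by (simp add: AM_def PMI_def)
  then show ?thesis
  proof
    assume "order_preserving a"
    then show ?thesis using op_unique[OF In] pid_props d r by metis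
  next
    assume rev: "order_reversing a"
    obtain \<sigma> where s: "\<sigma> permutes Omega n" "evenperm \<sigma>" "\<forall>x\<in>dom a. a x = Some (\<sigma> x)"
      using a by (auto simp: AM_def AI_def)
    have sd: "sdec (Omega n) \<sigma>" using or_sdec[OF In rev] s(3) d by (simp add: sdec_def)
    have rd: "sdec (Omega n) (rv n)" by (auto simp: sdec_def Omega_def rv_val)
    have rvp: "rv n permutes {1..n}" using rv_odd n by auto
    have "\<forall>x\<in>Omega n. \<sigma> x = rv n x"
      using dec_unique[OF _ sd rd] permutes_image[OF s(1)] permutes_image[OF rvp]
      by (simp add: Omega_def)
    then have "\<sigma> = rv n"
      using s(1) rvp by (intro ext) (metis Omega_def permutes_not_in)
    then show ?thesis using s(2) rv_odd n by simp
  qed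
qed

lemma corank1_ran:
  assumes "B \<subseteq> {1..n}" "card B = n - 1" "n \<ge> 1"
  shows "\<exists>j\<in>{1..n}. B = {1..n} - {j}"
proof -
  have "B \<noteq> {1..n}" using assms by auto
  then obtain j where j: "j \<in> {1..n}" "j \<notin> B" using assms(1) by blast
  then have "B \<subseteq> {1..n} - {j}" using assms(1) by blast
  moreover have "card ({1..n} - {j}) = n - 1" using j by simp
  ultimately have "B = {1..n} - {j}" using assms(2) by (simp add: card_subset_eq)
  then show ?thesis using j by blast
qed

lemma AM_corank1:
  assumes n: "n mod 4 = 2" and a: "a \<in> AM n" and i: "i \<in> Omega n" and d: "dom a = Xs n i"
  shows "\<exists>j\<in>Omega n. even (i + j) \<and> (\<exists>s. a = E n i j s)"
proof -
  have In: "a \<in> In n" using a AM_In by blast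
  have n1: "n \<ge> 1" using n by presburger
  have "card (ran a) = n - 1" using card_ran[OF In] d i by (simp add: Xs_def Omega_def)
  then obtain j where j: "j \<in> {1..n}" "ran a = {1..n} - {j}"
    using corank1_ran[of "ran a" n] In n1 by (auto simp: In_def Omega_def)
  have i': "i \<in> {1..n}" using i by (simp add: Omega_def)
  have jO: "j \<in> Omega n" using j by (simp add: Omega_def)
  obtain \<sigma> where s: "\<sigma> permutes Omega n" "evenperm \<sigma>" "\<forall>x\<in>dom a. a x = Some (\<sigma> x)"
    using a by (auto simp: AM_def AI_def)
  have "order_preserving a \<or> order_reversing a" using a by (simp add: AM_def PMI_def)
  then show ?thesis
  proof
    assume op: "order_preserving a"
    note P = E_props[OF i jO, of False]
    have ae: "a = E n i j False"
      using op_unique[OF In] P d j op by (simp add: Xs_def Omega_def)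
    have "\<forall>x\<in>{1..n} - {i}. \<sigma> x = cyc i j x"
      using s(3) d ae by (auto simp: E_def pm_def Xs_def Omega_def cyc_def)
    then have "\<sigma> = cyc i j" using perm_agree[of \<sigma> "{1..n}" "cyc i j" i] s(1) cyc_perm[OF i' j(1)] i'
      by (simp add: Omega_def)
    then have "even (i + j)" using s(2) cyc_perm[OF i' j(1)] by simp
    then show ?thesis using ae jO by blast
  next
    assume rv: "order_reversing a"
    note P = E_props[OF i jO, of True]
    have ae: "a = E n i j True"
      using or_unique[OF In] P d j rv by (simp add: Xs_def Omega_def)
    define j' where "j' = n + 1 - j"
    have j': "j' \<in> {1..n}" using j(1) by (auto simp: j'_def)
    have rvp: "rv n permutes {1..n}" "\<not> evenperm (rv n)" using rv_odd n by auto
    have sp: "\<sigma> permutes {1..n}" using s(1) by (simp add: Omega_def)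
    have "\<forall>x\<in>{1..n} - {i}. (rv n \<circ> \<sigma>) x = cyc i j' x"
    proof
      fix x assume x: "x \<in> {1..n} - {i}"
      then have "\<sigma> x = rv n (sh i j' x)" using s(3) d ae
        by (auto simp: E_def rm_def Xs_def Omega_def j'_def)
      moreover have "sh i j' x \<in> {1..n}" using sh_in[OF i' j'] x by auto
      ultimately show "(rv n \<circ> \<sigma>) x = cyc i j' x" using x rv_rv by (auto simp: cyc_def)
    qed
    then have "rv n \<circ> \<sigma> = cyc i j'"
      using perm_agree[of "rv n \<circ> \<sigma>" "{1..n}" "cyc i j'" i] permutes_compose[OF sp rvp(1)]
        cyc_perm[OF i' j'] i' by simp
    moreover have "\<not> evenperm (rv n \<circ> \<sigma>)"
      using evenperm_comp[OF perm_fin[OF rvp(1)] perm_fin[OF sp]] rvp s(2) by simp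
    ultimately have "odd (i + j')" using cyc_perm[OF i' j'] by simp
    moreover have jle: "j \<le> n" using j by simp
    ultimately have "even (i + j)" using n unfolding j'_def by presburger
    then show ?thesis using ae jO by blast
  qed
qed

lemma op_map_eq: "i \<in> Omega n \<Longrightarrow> j \<in> Omega n \<Longrightarrow> op_map n (Xs n i) (Xs n j) = pm n i j"
  unfolding op_map_def
  by (rule the_equality) (use pm_props op_unique in metis)+

lemma or_map_eq: "i \<in> Omega n \<Longrightarrow> j \<in> Omega n \<Longrightarrow> or_map n (Xs n i) (Xs n j) = rm n i j"
  unfolding or_map_def
  by (rule the_equality) (use rm_props or_unique in metis)+

lemma xg_eq:
  assumes n: "n mod 4 = 2" "n \<ge> 6"
  shows "xg n 1 = E n 1 (n - 1) False" "xg n 2 = E n 2 n False"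
    "3 \<le> i \<Longrightarrow> i \<le> n \<Longrightarrow> xg n i = E n i (i - 2) False"
    "i \<in> Omega n \<Longrightarrow> hg n i = E n i i True"
proof -
  have ev: "even n" using n by presburger
  show "xg n 1 = E n 1 (n - 1) False" using op_map_eq[of 1 n "n - 1"] n ev
    by (simp add: xg_def E_def Omega_def)
  show "xg n 2 = E n 2 n False" using op_map_eq[of 2 n n] n ev
    by (simp add: xg_def E_def Omega_def)
  show "3 \<le> i \<Longrightarrow> i \<le> n \<Longrightarrow> xg n i = E n i (i - 2) False"
  proof -
    assume "3 \<le> i" "i \<le> n"
    then have "i \<in> Omega n" "i - 2 \<in> Omega n" by (auto simp: Omega_def)
    then show ?thesis using op_map_eq[of i n "i - 2"] \<open>3 \<le> i\<close> by (simp add: xg_def E_def)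
  qed
  show "i \<in> Omega n \<Longrightarrow> hg n i = E n i i True" using or_map_eq[of i n i]
    by (simp add: hg_def E_def)
qed



lemma AM_pmult:
  assumes a: "a \<in> AM n" and b: "b \<in> AM n"
  shows "pmult a b \<in> AM n"
proof -
  have Ia: "a \<in> In n" and Ib: "b \<in> In n" using a b AM_In by blast+
  have In: "pmult a b \<in> In n" using pmult_In[OF Ia Ib] .
  have "order_preserving a \<or> order_reversing a" "order_preserving b \<or> order_reversing b"
    using a b by (simp_all add: AM_def PMI_def)
  then have mono: "order_preserving (pmult a b) \<or> order_reversing (pmult a b)"
    using op_comp_pp op_comp_pr op_comp_rp op_comp_rr by blast
  obtain sa where sa: "sa permutes Omega n" "evenperm sa" "\<forall>x\<in>dom a. a x = Some (sa x)"
    using a by (auto simp: AM_def AI_def)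
  obtain sb where sb: "sb permutes Omega n" "evenperm sb" "\<forall>x\<in>dom b. b x = Some (sb x)"
    using b by (auto simp: AM_def AI_def)
  have fin: "finite (Omega n)" by (simp add: Omega_def)
  have "evenperm (sb \<circ> sa)"
    using evenperm_comp[of sb sa] sa sb fin permutation_permutes by blast
  moreover have "sb \<circ> sa permutes Omega n" using permutes_compose[OF sa(1) sb(1)] .
  moreover have "\<forall>x\<in>dom (pmult a b). pmult a b x = Some ((sb \<circ> sa) x)"
  proof
    fix x assume x: "x \<in> dom (pmult a b)"
    then have xa: "x \<in> dom a" and xb: "the (a x) \<in> dom b" by (auto simp: dom_pmult)
    then have "a x = Some (sa x)" using sa(3) by blast
    moreover then have "b (sa x) = Some (sb (sa x))" using sb(3) xb by simp
    ultimately show "pmult a b x = Some ((sb \<circ> sa) x)" by (simp add: pmult_apply)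
  qed
  ultimately have "pmult a b \<in> AI n" using In by (auto simp: AI_def)
  then show ?thesis using In mono by (simp add: AM_def PMI_def)
qed

lemma pid_AM: "pid n \<in> AM n"
proof -
  have "pid n \<in> AI n" using pid_props[of n]
    by (auto simp: AI_def pid_def intro!: exI[of _ id] split: if_splits)
  then show ?thesis using pid_props[of n] by (auto simp: AM_def PMI_def)
qed

lemma gen_AM: "G \<subseteq> AM n \<Longrightarrow> gen n G \<subseteq> AM n"
proof
  fix a assume G: "G \<subseteq> AM n" and a: "a \<in> gen n G"
  from a show "a \<in> AM n"
    by (induction rule: gen.induct) (use G in \<open>auto simp: pid_AM AM_pmult\<close>)
qed

lemma chain:
  assumes n: "n mod 4 = 2" "n \<ge> 6" and b: "b = 1 \<or> b = 2" and t: "t = n - 2 + b"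
    and top: "E n b t True \<in> gen n G"
    and steps: "\<And>i. b + 2 \<le> i \<Longrightarrow> i \<le> t \<Longrightarrow> even (i + b) \<Longrightarrow> E n i (i - 2) False \<in> gen n G"
  shows "\<And>i j s. b \<le> i \<Longrightarrow> i \<le> t \<Longrightarrow> b \<le> j \<Longrightarrow> j \<le> t \<Longrightarrow> even (i + b) \<Longrightarrow> even (j + b)
          \<Longrightarrow> E n i j s \<in> gen n G"
proof -
  have tn: "t \<le> n" "b \<ge> 1" "t \<ge> b + 4" using n b t by auto
  have inO: "\<And>x. b \<le> x \<Longrightarrow> x \<le> t \<Longrightarrow> x \<in> Omega n" using tn by (auto simp: Omega_def)
  have comp: "\<And>i k j s r. b \<le> i \<Longrightarrow> i \<le> t \<Longrightarrow> b \<le> k \<Longrightarrow> k \<le> t \<Longrightarrow> b \<le> j \<Longrightarrow> j \<le> t \<Longrightarrow>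
      E n i k s \<in> gen n G \<Longrightarrow> E n k j r \<in> gen n G \<Longrightarrow> E n i j (s \<noteq> r) \<in> gen n G"
  proof -
    fix i k j s r assume h: "b \<le> i" "i \<le> t" "b \<le> k" "k \<le> t" "b \<le> j" "j \<le> t"
      "E n i k s \<in> gen n G" "E n k j r \<in> gen n G"
    have "pmult (E n i k s) (E n k j r) \<in> gen n G" using h(7,8) by (rule gen.gen_mult)
    moreover have "pmult (E n i k s) (E n k j r) = E n i j (s \<noteq> r)"
      using E_comp[OF inO[OF h(1,2)] inO[OF h(3,4)] inO[OF h(5,6)]] .
    ultimately show "E n i j (s \<noteq> r) \<in> gen n G" by simp
  qed
  have W0: "\<And>d j. b \<le> j \<Longrightarrow> j + 2 * (d + 1) \<le> t \<Longrightarrow> even (j + b) \<Longrightarrow> E n (j + 2 * (d + 1)) j False \<in> gen n G"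
  proof -
    fix d show "\<And>j. b \<le> j \<Longrightarrow> j + 2 * (d + 1) \<le> t \<Longrightarrow> even (j + b) \<Longrightarrow> E n (j + 2 * (d + 1)) j False \<in> gen n G"
    proof (induction d)
      case 0
      then show ?case using steps[of "j + 2"] by simp
    next
      case (Suc d)
      have A: "E n (j + 2 * (Suc d + 1)) (j + 2) False \<in> gen n G"
        using Suc.IH[of "j + 2"] Suc.prems by (simp add: algebra_simps)
      have B: "E n (j + 2) j False \<in> gen n G" using steps[of "j + 2"] Suc.prems by simp
      show ?case using comp[OF _ _ _ _ _ _ A B] Suc.prems by simp
    qed
  qed
  have W: "\<And>i j. b \<le> j \<Longrightarrow> j < i \<Longrightarrow> i \<le> t \<Longrightarrow> even (i + b) \<Longrightarrow> even (j + b) \<Longrightarrow> E n i j False \<in> gen n G"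
  proof -
    fix i j assume h: "b \<le> j" "j < i" "i \<le> t" "even (i + b)" "even (j + b)"
    have e: "i = j + 2 * ((i - j) div 2 - 1 + 1)" using h(2,4,5) by presburger
    show "E n i j False \<in> gen n G" using W0[of j "(i - j) div 2 - 1"] h e by simp
  qed
  have tb: "even (t + b)" using t n b by presburger
  have bbT: "E n b b True \<in> gen n G"
    using comp[OF _ _ _ _ _ _ top W[of b t]] tn tb by simp
  have bbF: "E n b b False \<in> gen n G"
    using comp[OF _ _ _ _ _ _ bbT bbT] tn by simp
  have ib: "\<And>i. b \<le> i \<Longrightarrow> i \<le> t \<Longrightarrow> even (i + b) \<Longrightarrow> E n i b False \<in> gen n G"
  proof -
    fix i assume h: "b \<le> i" "i \<le> t" "even (i + b)"
    show "E n i b False \<in> gen n G"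
    proof (cases "i = b")
      case True then show ?thesis using bbF by simp
    next
      case False
      then have "b < i" using h by simp
      show ?thesis by (rule W) (use h \<open>b < i\<close> in auto)
    qed
  qed
  have bjT: "\<And>j. b \<le> j \<Longrightarrow> j \<le> t \<Longrightarrow> even (j + b) \<Longrightarrow> E n b j True \<in> gen n G"
  proof -
    fix j assume h: "b \<le> j" "j \<le> t" "even (j + b)"
    show "E n b j True \<in> gen n G"
    proof (cases "j = t")
      case True then show ?thesis using top by simp
    next
      case False
      then show ?thesis using comp[OF _ _ _ _ _ _ top W[of j t]] h tn tb by simp
    qed
  qed
  have bj: "\<And>j s. b \<le> j \<Longrightarrow> j \<le> t \<Longrightarrow> even (j + b) \<Longrightarrow> E n b j s \<in> gen n G"
  proof -
    fix j s assume h: "b \<le> j" "j \<le> t" "even (j + b)"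
    show "E n b j s \<in> gen n G"
    proof (cases s)
      case True then show ?thesis using bjT h by simp
    next
      case False
      then show ?thesis using comp[OF _ _ _ _ _ _ bbT bjT[OF h]] h tn by simp
    qed
  qed
  show "\<And>i j s. b \<le> i \<Longrightarrow> i \<le> t \<Longrightarrow> b \<le> j \<Longrightarrow> j \<le> t \<Longrightarrow> even (i + b) \<Longrightarrow> even (j + b)
          \<Longrightarrow> E n i j s \<in> gen n G"
  proof -
    fix i j s assume h: "b \<le> i" "i \<le> t" "b \<le> j" "j \<le> t" "even (i + b)" "even (j + b)"
    show "E n i j s \<in> gen n G"
      using comp[OF _ _ _ _ _ _ ib[of i] bj[of j s]] h tn by simp
  qed
qed



definition idm :: "nat set \<Rightarrow> pmap" where
  "idm D = (\<lambda>x. if x \<in> D then Some x else None)"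

lemma idm_pmult: "pmult (idm A) (idm B) = idm (A \<inter> B)"
  by (rule ext) (simp add: idm_def pmult_apply)

lemma E_id: "E n i i False = idm (Xs n i)"
  by (rule ext) (simp add: E_def pm_def idm_def sh_def)

lemma pid_idm: "pid n = idm (Omega n)"
  by (simp add: pid_def idm_def)

lemma idm_props: "D \<subseteq> Omega n \<Longrightarrow> idm D \<in> In n \<and> dom (idm D) = D \<and> order_preserving (idm D)"
  by (auto simp: idm_def In_def dom_def ran_def inj_on_def order_preserving_def split: if_splits)

locale gctx =
  fixes n :: nat and G :: "pmap set"
  assumes n4: "n mod 4 = 2" and n6: "n \<ge> 6" and GA: "G \<subseteq> AM n"
    and EALL: "\<And>i j s. i \<in> Omega n \<Longrightarrow> j \<in> Omega n \<Longrightarrow> even (i + j) \<Longrightarrow> E n i j s \<in> gen n G"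
begin

lemma S_AM: "a \<in> gen n G \<Longrightarrow> a \<in> AM n"
  using gen_AM[OF GA] by blast

lemma S_In: "a \<in> gen n G \<Longrightarrow> a \<in> In n"
  using S_AM AM_In by blast

lemma idm_S: "D \<subseteq> Omega n \<Longrightarrow> idm D \<in> gen n G"
proof -
  have "\<And>F. finite F \<Longrightarrow> F \<subseteq> Omega n \<Longrightarrow> idm (Omega n - F) \<in> gen n G"
  proof -
    fix F :: "nat set" assume "finite F" "F \<subseteq> Omega n"
    then show "idm (Omega n - F) \<in> gen n G"
    proof (induction F rule: finite_induct)
      case empty
      then show ?case using gen.gen_id[of n G] by (simp add: pid_idm)
    next
      case (insert x F)
      have x: "x \<in> Omega n" using insert by simp
      have "E n x x False \<in> gen n G" using EALL[OF x x] by simp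
      then have "idm (Xs n x) \<in> gen n G" by (simp add: E_id)
      moreover have "idm (Omega n - F) \<in> gen n G" using insert by simp
      ultimately have "pmult (idm (Omega n - F)) (idm (Xs n x)) \<in> gen n G"
        using gen.gen_mult by blast
      moreover have "(Omega n - F) \<inter> Xs n x = Omega n - insert x F" by (auto simp: Xs_def)
      ultimately show ?case by (simp add: idm_pmult)
    qed
  qed
  moreover assume "D \<subseteq> Omega n"
  moreover then have "D = Omega n - (Omega n - D)" by blast
  moreover have "finite (Omega n - D)" by (simp add: Omega_def)
  ultimately show ?thesis by (metis Diff_subset)
qed

definition Rel :: "nat set \<Rightarrow> nat set \<Rightarrow> bool" where
  "Rel D R \<longleftrightarrow> (\<exists>\<beta>\<in>gen n G. order_preserving \<beta> \<and> D \<subseteq> dom \<beta> \<and> (\<lambda>x. the (\<beta> x)) ` D = R)"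

lemma Rel_refl: "D \<subseteq> Omega n \<Longrightarrow> Rel D D"
  unfolding Rel_def
  using gen.gen_id[of n G] pid_props[of n] by (intro bexI[of _ "pid n"]) (auto simp: pid_def image_def)

lemma Rel_trans:
  assumes "Rel D R" "Rel R Q" shows "Rel D Q"
proof -
  obtain b1 where b1: "b1 \<in> gen n G" "order_preserving b1" "D \<subseteq> dom b1" "(\<lambda>x. the (b1 x)) ` D = R"
    using assms(1) by (auto simp: Rel_def)
  obtain b2 where b2: "b2 \<in> gen n G" "order_preserving b2" "R \<subseteq> dom b2" "(\<lambda>x. the (b2 x)) ` R = Q"
    using assms(2) by (auto simp: Rel_def)
  have S: "pmult b1 b2 \<in> gen n G" using b1(1) b2(1) gen.gen_mult by blast
  have op: "order_preserving (pmult b1 b2)" using op_comp_pp b1(2) b2(2) by blast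
  have d: "D \<subseteq> dom (pmult b1 b2)" using b1(3,4) b2(3) by (auto simp: dom_pmult)
  have "(\<lambda>x. the (pmult b1 b2 x)) ` D = (\<lambda>x. the (b2 (the (b1 x)))) ` D"
    by (rule image_cong) (use d pmult_the in blast)+
  also have "\<dots> = (\<lambda>y. the (b2 y)) ` ((\<lambda>x. the (b1 x)) ` D)" by (simp add: image_image)
  finally have "(\<lambda>x. the (pmult b1 b2 x)) ` D = (\<lambda>y. the (b2 y)) ` ((\<lambda>x. the (b1 x)) ` D)" .
  then have "(\<lambda>x. the (pmult b1 b2 x)) ` D = Q" using b1(4) b2(4) by simp
  then show ?thesis using S op d by (auto simp: Rel_def)
qed

lemma sh_back: "i \<in> Omega n \<Longrightarrow> j \<in> Omega n \<Longrightarrow> x \<in> Xs n i \<Longrightarrow> sh j i (sh i j x) = x"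
proof -
  assume i: "i \<in> Omega n" and j: "j \<in> Omega n" and x: "x \<in> Xs n i"
  have "pmult (E n i j False) (E n j i False) = E n i i False" using E_comp[OF i j i] by simp
  then have "pmult (E n i j False) (E n j i False) x = Some x" using x by (simp add: E_id idm_def)
  moreover have "sh i j x \<in> Xs n j" using sh_in[of i n j x] i j x by (simp add: Xs_def Omega_def)
  ultimately show ?thesis using x by (simp add: pmult_apply E_def pm_def)
qed

lemma Rel_move:
  assumes i: "i \<in> Omega n" and j: "j \<in> Omega n" and p: "even (i + j)" and D: "D \<subseteq> Xs n i"
  shows "Rel D (sh i j ` D) \<and> Rel (sh i j ` D) D"
proof
  have "E n i j False \<in> gen n G" using EALL i j p by blast
  moreover have "order_preserving (E n i j False)" using E_props[OF i j, of False] by simp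
  moreover have "D \<subseteq> dom (E n i j False)" using E_props[OF i j, of False] D by simp
  moreover have "(\<lambda>x. the (E n i j False x)) ` D = sh i j ` D"
    using D by (auto simp: E_def pm_def image_def)
  ultimately show "Rel D (sh i j ` D)" by (auto simp: Rel_def)
next
  have pj: "even (j + i)" using p by (simp add: add.commute)
  have sD: "sh i j ` D \<subseteq> Xs n j"
  proof
    fix y assume "y \<in> sh i j ` D"
    then obtain x where x: "x \<in> D" "y = sh i j x" by blast
    then have "x \<in> {1..n} - {i}" using D by (auto simp: Xs_def Omega_def)
    then have "sh i j x \<in> {1..n} - {j}" using sh_in[of i n j x] i j by (simp add: Omega_def)
    then show "y \<in> Xs n j" using x by (simp add: Xs_def Omega_def)
  qed
  have "E n j i False \<in> gen n G" using EALL i j pj by blast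
  moreover have "order_preserving (E n j i False)" using E_props[OF j i, of False] by simp
  moreover have "sh i j ` D \<subseteq> dom (E n j i False)" using E_props[OF j i, of False] sD by simp
  moreover have "(\<lambda>x. the (E n j i False x)) ` (sh i j ` D) = D"
  proof -
    have "(\<lambda>x. the (E n j i False x)) ` (sh i j ` D) = (\<lambda>x. sh j i (sh i j x)) ` D"
      using sD by (auto simp: E_def pm_def image_def)
    also have "\<dots> = D" using sh_back[OF i j] D by (auto simp: image_def) (metis subsetD)+
    finally show ?thesis .
  qed
  ultimately show "Rel (sh i j ` D) D" by (auto simp: Rel_def)
qed

end



lemma gap_exists:
  assumes D: "D \<subseteq> {1..(n::nat)}" and ne: "D \<noteq> {1..card D}"
  shows "\<exists>x. x \<ge> 1 \<and> x \<notin> D \<and> x + 1 \<in> D"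
proof (rule ccontr)
  assume "\<not> ?thesis"
  then have H: "\<And>x. x \<ge> 1 \<Longrightarrow> x + 1 \<in> D \<Longrightarrow> x \<in> D" by blast
  have dc: "\<And>y x. y \<in> D \<Longrightarrow> 1 \<le> x \<Longrightarrow> x \<le> y \<Longrightarrow> x \<in> D"
  proof -
    fix y x :: nat assume y: "y \<in> D" and x: "1 \<le> x" "x \<le> y"
    have "\<And>k x. x + k = y \<Longrightarrow> 1 \<le> x \<Longrightarrow> x \<in> D"
    proof -
      fix k show "\<And>x. x + k = y \<Longrightarrow> 1 \<le> x \<Longrightarrow> x \<in> D"
      proof (induction k)
        case 0 then show ?case using y by simp
      next
        case (Suc k)
        then have "x + 1 \<in> D" using Suc.IH[of "x + 1"] by simp
        then show ?case using H Suc.prems by blast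
      qed
    qed
    then show "x \<in> D" using x by (metis le_add_diff_inverse)
  qed
  have fin: "finite D" using D finite_subset by blast
  show False
  proof (cases "D = {}")
    case True then show False using ne by simp
  next
    case False
    define m where "m = Max D"
    have mD: "m \<in> D" using False fin m_def by simp
    have "D = {1..m}"
    proof
      show "D \<subseteq> {1..m}" using D fin m_def by auto
      show "{1..m} \<subseteq> D" using dc mD by auto
    qed
    then show False using ne by simp
  qed
qed

lemma move_exists:
  assumes D: "D \<subseteq> {1..(n::nat)}" and c: "card D + 2 \<le> n" and ne: "D \<noteq> {1..card D}"
  shows "\<exists>i j. i \<in> {1..n} \<and> j \<in> {1..n} \<and> i \<notin> D \<and> i < j \<and> even (i + j) \<and> (\<exists>d\<in>D. i < d \<and> d \<le> j)"
proof -
  obtain x where x: "x \<ge> 1" "x \<notin> D" "x + 1 \<in> D" using gap_exists[OF D ne] by blast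
  have x1n: "x + 1 \<le> n" using x D by auto
  show ?thesis
  proof (cases "x + 2 \<le> n")
    case True
    then show ?thesis using x by (intro exI[of _ x] exI[of _ "x + 2"]) auto
  next
    case False
    then have xn: "x + 1 = n" using x1n by simp
    have fin: "finite D" using D finite_subset by blast
    have cc: "card ({1..n} - D) \<ge> 2" using c D fin by (simp add: card_Diff_subset)
    have "\<exists>y\<in>{1..n} - D. y \<noteq> x"
    proof (rule ccontr)
      assume "\<not> ?thesis"
      then have "{1..n} - D \<subseteq> {x}" by blast
      then have "card ({1..n} - D) \<le> 1" using card_mono[of "{x}"] by fastforce
      then show False using cc by simp
    qed
    then obtain y where y: "y \<in> {1..n}" "y \<notin> D" "y \<noteq> x" by blast
    have yx: "y < x" using y x xn by (metis atLeastAtMost_iff le_neq_implies_less less_Suc_eq Suc_eq_plus1)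
    show ?thesis
    proof (cases "even (y + n)")
      case True
      have "y \<in> {1..n} \<and> n \<in> {1..n} \<and> y \<notin> D \<and> y < n \<and> even (y + n) \<and> (y < n \<and> n \<le> n) \<and> n \<in> D"
        using y yx xn x True by auto
      then show ?thesis by blast
    next
      case odd: False
      show ?thesis
      proof (cases "y + 1 \<in> D")
        case True
        have "y \<in> {1..n} \<and> y + 2 \<in> {1..n} \<and> y \<notin> D \<and> y < y + 2 \<and> even (y + (y + 2)) \<and> (y < y + 1 \<and> y + 1 \<le> y + 2)"
          using y yx xn by auto
        then show ?thesis using True by blast
      next
        case False
        have "y + 1 \<in> {1..n} \<and> n \<in> {1..n} \<and> y + 1 \<notin> D \<and> y + 1 < n \<and> even (y + 1 + n) \<and> (y + 1 < n \<and> n \<le> n) \<and> n \<in> D"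
          using y yx xn x odd False by auto
        then show ?thesis by blast
      qed
    qed
  qed
qed

lemma sh_le: "i < j \<Longrightarrow> sh i j x \<le> x"
  by (simp add: sh_def)

lemma sh_lt: "i < j \<Longrightarrow> i < x \<Longrightarrow> x \<le> j \<Longrightarrow> sh i j x < x"
  by (simp add: sh_def)

lemma sum_dec:
  assumes "finite D" "i < j" "i \<notin> D" "d \<in> D" "i < d" "d \<le> j"
  shows "sum (\<lambda>x. x) (sh i j ` D) < sum (\<lambda>x. x) D"
proof -
  have inj: "inj_on (sh i j) D" using sh_inj assms(3) by (metis inj_onI)
  have "sum (\<lambda>x. x) (sh i j ` D) = sum (sh i j) D" using sum.reindex[OF inj] by simp
  also have "\<dots> < sum (\<lambda>x. x) D"
    using sum_strict_mono_ex1[OF assms(1), of "sh i j" "\<lambda>x. x"] sh_le[OF assms(2)] sh_lt[OF assms(2,5,6)] assms(4)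
    by blast
  finally show ?thesis .
qed

context gctx begin

lemma claimB_aux:
  "\<forall>D. sum (\<lambda>x. x) D = s \<longrightarrow> D \<subseteq> Omega n \<longrightarrow> card D + 2 \<le> n \<longrightarrow> Rel D {1..card D} \<and> Rel {1..card D} D"
proof (induction s rule: less_induct)
  case (less s)
  show ?case
  proof (intro allI impI)
    fix D assume s: "sum (\<lambda>x. x) D = s" and D: "D \<subseteq> Omega n" and c: "card D + 2 \<le> n"
    have D': "D \<subseteq> {1..n}" using D by (simp add: Omega_def)
    have fin: "finite D" using D' finite_subset by blast
    show "Rel D {1..card D} \<and> Rel {1..card D} D"
    proof (cases "D = {1..card D}")
      case True
      then show ?thesis using Rel_refl[OF D] by simp
    next
      case False
      obtain i j d where ij: "i \<in> {1..n}" "j \<in> {1..n}" "i \<notin> D" "i < j" "even (i + j)"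
        "d \<in> D" "i < d" "d \<le> j"
        using move_exists[OF D' c False] by blast
      define D1 where "D1 = sh i j ` D"
      have lt: "sum (\<lambda>x. x) D1 < s" using sum_dec[OF fin ij(4,3,6,7,8)] s D1_def by simp
      have inj: "inj_on (sh i j) D" using sh_inj ij(3) by (metis inj_onI)
      have cD1: "card D1 = card D" using card_image[OF inj] D1_def by simp
      have iO: "i \<in> Omega n" "j \<in> Omega n" using ij by (auto simp: Omega_def)
      have DX: "D \<subseteq> Xs n i" using D ij(3) by (auto simp: Xs_def)
      have D1O: "D1 \<subseteq> Omega n"
      proof
        fix y assume "y \<in> D1"
        then obtain x where x: "x \<in> D" "y = sh i j x" using D1_def by blast
        then have "x \<in> {1..n} - {i}" using D' ij(3) by auto
        then show "y \<in> Omega n" using sh_in[of i n j x] ij x by (simp add: Omega_def)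
      qed
      have IH: "Rel D1 {1..card D1} \<and> Rel {1..card D1} D1"
        using spec[OF less.IH[OF lt], of D1] D1O cD1 c by simp
      have mv: "Rel D D1 \<and> Rel D1 D" using Rel_move[OF iO ij(5) DX] D1_def by simp
      show ?thesis using IH mv cD1 Rel_trans by metis
    qed
  qed
qed

lemma claimB: "D \<subseteq> Omega n \<Longrightarrow> R \<subseteq> Omega n \<Longrightarrow> card D + 2 \<le> n \<Longrightarrow> card R = card D \<Longrightarrow> Rel D R"
  using claimB_aux Rel_trans by metis

end



context gctx begin

lemma small_rank:
  assumes a: "a \<in> AM n" and c: "card (dom a) + 2 \<le> n"
  shows "a \<in> gen n G"
proof -
  have In: "a \<in> In n" using a AM_In by blast
  define D where "D = dom a"
  define R where "R = ran a"
  have DO: "D \<subseteq> Omega n" and RO: "R \<subseteq> Omega n" using In by (auto simp: In_def D_def R_def)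
  have cR: "card R = card D" using card_ran[OF In] by (simp add: D_def R_def)
  have cD: "card D + 2 \<le> n" using c D_def by simp
  have idS: "idm D \<in> gen n G" using idm_S[OF DO] .
  note idp = idm_props[OF DO]
  have "order_preserving a \<or> order_reversing a" using a by (simp add: AM_def PMI_def)
  then show ?thesis
  proof
    assume op: "order_preserving a"
    obtain b where b: "b \<in> gen n G" "order_preserving b" "D \<subseteq> dom b" "(\<lambda>x. the (b x)) ` D = R"
      using claimB[OF DO RO cD cR] by (auto simp: Rel_def)
    define g where "g = pmult (idm D) b"
    have gS: "g \<in> gen n G" using gen.gen_mult[OF idS b(1)] g_def by simp
    have gI: "g \<in> In n" using S_In[OF gS] .
    have gd: "dom g = D" using b(3) idp by (auto simp: g_def dom_pmult idm_def)
    have gv: "\<And>x. x \<in> D \<Longrightarrow> the (g x) = the (b x)" by (simp add: g_def pmult_apply idm_def)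
    have "ran g = (\<lambda>x. the (g x)) ` D" using ran_the gd by metis
    also have "\<dots> = (\<lambda>x. the (b x)) ` D" using gv by (rule image_cong[OF refl])
    finally have gr: "ran g = R" using b(4) by simp
    have gp: "order_preserving g" using op_comp_pp idp b(2) g_def by blast
    have "a = g" using op_unique[OF In gI] gd gr gp op D_def R_def by blast
    then show ?thesis using gS by simp
  next
    assume orv: "order_reversing a"
    have "card R < card (Omega n)" using cR cD by (simp add: Omega_def)
    then have "R \<noteq> Omega n" by auto
    then obtain j where j: "j \<in> Omega n" "j \<notin> R" using RO by blast
    define h where "h = E n j j True"
    note hP = E_props[OF j(1) j(1), of True, folded h_def]
    have hS: "h \<in> gen n G" using EALL[OF j(1) j(1)] h_def by simp
    have RX: "R \<subseteq> Xs n j" using RO j by (auto simp: Xs_def)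
    have hh: "\<And>y. y \<in> Xs n j \<Longrightarrow> the (h (the (h y))) = y"
    proof -
      fix y assume y: "y \<in> Xs n j"
      have "pmult h h = E n j j False" using E_comp[OF j(1) j(1) j(1)] h_def by simp
      then have "pmult h h y = Some y" using y by (simp add: E_id idm_def)
      moreover obtain z where "h y = Some z" using y hP by blast
      ultimately show "the (h (the (h y))) = y" by (simp add: pmult_apply)
    qed
    define R' where "R' = (\<lambda>y. the (h y)) ` R"
    have R'X: "R' \<subseteq> Xs n j"
    proof -
      have "R' \<subseteq> (\<lambda>y. the (h y)) ` Xs n j" unfolding R'_def using RX by (rule image_mono)
      also have "\<dots> = ran h" using ran_the[of h] hP by simp
      finally show ?thesis using hP by simp
    qed
    have R'O: "R' \<subseteq> Omega n" using R'X by (auto simp: Xs_def)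
    have "inj_on (\<lambda>y. the (h y)) R"
    proof (rule inj_onI)
      fix x y assume "x \<in> R" "y \<in> R" "the (h x) = the (h y)"
      moreover then have "x \<in> dom h" "y \<in> dom h" using RX hP by auto
      ultimately show "x = y" using In_the_inj[of h n x y] hP by blast
    qed
    then have cR': "card R' = card D" using card_image cR R'_def by metis
    obtain b where b: "b \<in> gen n G" "order_preserving b" "D \<subseteq> dom b" "(\<lambda>x. the (b x)) ` D = R'"
      using claimB[OF DO R'O cD cR'] by (auto simp: Rel_def)
    define g where "g = pmult (idm D) (pmult b h)"
    have gS: "g \<in> gen n G" using gen.gen_mult[OF idS gen.gen_mult[OF b(1) hS]] g_def by simp
    have gI: "g \<in> In n" using S_In[OF gS] .
    have bx: "\<And>x. x \<in> D \<Longrightarrow> x \<in> dom b \<and> the (b x) \<in> dom h"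
      using b(3,4) R'X hP by auto
    have dbh: "D \<subseteq> dom (pmult b h)" using bx by (auto simp: dom_pmult)
    have gd: "dom g = D" unfolding g_def using dbh idp
      by (auto simp: dom_pmult idm_def split: if_splits)
    have gv: "\<And>x. x \<in> D \<Longrightarrow> the (g x) = the (h (the (b x)))"
      using bx by (auto simp: g_def pmult_apply idm_def split: option.splits)
    have "ran g = (\<lambda>x. the (g x)) ` D" using ran_the gd by metis
    also have "\<dots> = (\<lambda>x. the (h (the (b x)))) ` D" using gv by (rule image_cong[OF refl])
    also have "\<dots> = (\<lambda>y. the (h y)) ` R'" using b(4) by (auto simp: image_image[symmetric])
    also have "\<dots> = (\<lambda>y. the (h (the (h y)))) ` R" by (simp add: R'_def image_image)
    also have "\<dots> = R" using hh RX by (auto simp: image_def) (metis subsetD)+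
    finally have gr: "ran g = R" .
    have gp: "order_reversing g"
      using op_comp_pr[OF idp[THEN conjunct2, THEN conjunct2] op_comp_pr[OF b(2)]] hP g_def by simp
    have "a = g" using or_unique[OF In gI] gd gr gp orv D_def R_def by blast
    then show ?thesis using gS by simp
  qed
qed

lemma gen_eq: "gen n G = AM n"
proof
  show "gen n G \<subseteq> AM n" using gen_AM[OF GA] .
next
  show "AM n \<subseteq> gen n G"
  proof
    fix a assume a: "a \<in> AM n"
    have In: "a \<in> In n" using a AM_In by blast
    have dO: "dom a \<subseteq> {1..n}" using In by (simp add: In_def Omega_def)
    then have cle: "card (dom a) \<le> n" using card_mono[OF finite_atLeastAtMost dO] by simp
    show "a \<in> gen n G"
    proof (cases "card (dom a) = n")
      case True
      then have "dom a = Omega n" using dO by (simp add: card_subset_eq Omega_def)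
      then have "a = pid n" using AM_full[OF n4 a] by simp
      then show ?thesis using gen.gen_id by simp
    next
      case F1: False
      show ?thesis
      proof (cases "card (dom a) = n - 1")
        case True
        obtain i where i: "i \<in> {1..n}" "dom a = {1..n} - {i}"
          using corank1_ran[OF dO True] n6 by auto
        have "i \<in> Omega n" "dom a = Xs n i" using i by (auto simp: Omega_def Xs_def)
        then obtain j s where "j \<in> Omega n" "even (i + j)" "a = E n i j s"
          using AM_corank1[OF n4 a] by blast
        then show ?thesis using EALL \<open>i \<in> Omega n\<close> by blast
      next
        case False
        then have "card (dom a) + 2 \<le> n" using F1 cle by simp
        then show ?thesis using small_rank[OF a] by blast
      qed
    qed
  qed
qed

end



lemma gen_dom:
  assumes "c \<in> gen n A"
  shows "c = pid n \<or> (\<exists>a\<in>A. a \<noteq> pid n \<and> dom c \<subseteq> dom a)"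
  using assms
proof (induction rule: gen.induct)
  case gen_id then show ?case by simp
next
  case (gen_base a) then show ?case by blast
next
  case (gen_mult c1 c2)
  have d1: "dom (pmult c1 c2) \<subseteq> dom c1" by (auto simp: dom_pmult)
  have d2: "c1 = pid n \<Longrightarrow> dom (pmult c1 c2) \<subseteq> dom c2" by (auto simp: dom_pmult pid_def split: if_splits)
  show ?case
  proof (cases "c1 = pid n")
    case True
    show ?thesis
    proof (cases "c2 = pid n")
      case True
      then show ?thesis using \<open>c1 = pid n\<close> by (simp add: pid_idm idm_pmult)
    next
      case False
      then show ?thesis using gen_mult.IH(2) d2[OF True] by blast
    qed
  next
    case False
    then show ?thesis using gen_mult.IH(1) d1 by blast
  qed
qed

lemma In_finite_set: "finite (In n)"
proof -
  have "In n \<subseteq> {f. \<forall>x. (x \<in> Omega n \<longrightarrow> f x \<in> insert None (Some ` Omega n)) \<and> (x \<notin> Omega n \<longrightarrow> f x = None)}"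
  proof (intro subsetI CollectI allI conjI impI)
    fix f x assume f: "f \<in> In n"
    show "x \<in> Omega n \<Longrightarrow> f x \<in> insert None (Some ` Omega n)"
    proof (cases "f x")
      case (Some y)
      then have "y \<in> ran f" by (auto simp: ran_def)
      then show ?thesis using f Some by (auto simp: In_def)
    qed simp
    show "x \<notin> Omega n \<Longrightarrow> f x = None" using f by (auto simp: In_def)
  qed
  moreover have "finite {f. \<forall>x. (x \<in> Omega n \<longrightarrow> f x \<in> insert None (Some ` Omega n)) \<and> (x \<notin> Omega n \<longrightarrow> f x = (None :: nat option))}"
    by (rule finite_set_of_finite_funs) (auto simp: Omega_def)
  ultimately show ?thesis using finite_subset by blast
qed

lemma lower_bound:
  assumes n4: "n mod 4 = 2" and A: "A \<subseteq> AM n" "gen n A = AM n"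
  shows "finite A \<and> n \<le> card A"
proof -
  have finA: "finite A" using A(1) In_finite_set finite_subset AM_In by (metis subsetI subset_iff)
  have ex: "\<And>i. i \<in> Omega n \<Longrightarrow> \<exists>a\<in>A. dom a = Xs n i"
  proof -
    fix i assume i: "i \<in> Omega n"
    have "E n i i False \<in> gen n A" using E_AM[OF n4 i i] A(2) by simp
    moreover have "E n i i False \<noteq> pid n"
      using E_props[OF i i, of False] pid_props[of n] i by (auto simp: Xs_def)
    ultimately obtain a where a: "a \<in> A" "a \<noteq> pid n" "Xs n i \<subseteq> dom a"
      using gen_dom[of "E n i i False" n A] E_props[OF i i, of False] by auto
    have aAM: "a \<in> AM n" using a A(1) by blast
    have "dom a \<subseteq> Omega n" using AM_In[OF aAM] by (simp add: In_def)
    moreover have "dom a \<noteq> Omega n" using AM_full[OF n4 aAM] a(2) by blast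
    ultimately have "dom a = Xs n i" using a(3) i by (auto simp: Xs_def)
    then show "\<exists>a\<in>A. dom a = Xs n i" using a(1) by blast
  qed
  define f where "f i = (SOME a. a \<in> A \<and> dom a = Xs n i)" for i
  have f: "\<And>i. i \<in> Omega n \<Longrightarrow> f i \<in> A \<and> dom (f i) = Xs n i"
    using ex unfolding f_def by (metis (mono_tags, lifting) someI_ex)
  have "inj_on f (Omega n)"
  proof (rule inj_onI)
    fix i i' assume "i \<in> Omega n" "i' \<in> Omega n" "f i = f i'"
    then have "Xs n i = Xs n i'" using f by metis
    then show "i = i'" using \<open>i \<in> Omega n\<close> \<open>i' \<in> Omega n\<close> by (auto simp: Xs_def)
  qed
  moreover have "f ` Omega n \<subseteq> A" using f by blast
  ultimately have "card (Omega n) \<le> card A" using card_inj_on_le finA by blast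
  then show ?thesis using finA by (simp add: Omega_def)
qed

theorem theorem5p7:
  fixes n :: nat
  assumes "n mod 4 = 2" and "n \<ge> 6"
  defines "G \<equiv> {pmult (xg n 1) (hg n (n - 1)), pmult (xg n 2) (hg n n)}
                 \<union> {xg n i | i. 3 \<le> i \<and> i \<le> n}"
  shows "G \<subseteq> AM n \<and> gen n G = AM n
         \<and> (\<forall>A. A \<subseteq> AM n \<and> gen n A = AM n \<longrightarrow> card G \<le> card A)
         \<and> card G = n \<and> rank n (AM n) = n"
proof -
  note n4 = assms(1) and n6 = assms(2)
  have ev: "even n" using n4 by presburger
  have O1: "1 \<in> Omega n" "n - 1 \<in> Omega n" "2 \<in> Omega n" "n \<in> Omega n"
    using n6 by (auto simp: Omega_def)
  have g1: "pmult (xg n 1) (hg n (n - 1)) = E n 1 (n - 1) True"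
    using xg_eq[OF n4 n6] E_comp[OF O1(1) O1(2) O1(2), of False True] O1 by simp
  have g2: "pmult (xg n 2) (hg n n) = E n 2 n True"
    using xg_eq[OF n4 n6] E_comp[OF O1(3) O1(4) O1(4), of False True] O1 by simp
  define g where "g i = (if i = 1 then E n 1 (n - 1) True else if i = 2 then E n 2 n True
                         else E n i (i - 2) False)" for i
  have Gg: "G = g ` {1..n}"
  proof
    show "G \<subseteq> g ` {1..n}"
    proof
      fix x assume "x \<in> G"
      then consider "x = E n 1 (n - 1) True" | "x = E n 2 n True" | i where "3 \<le> i" "i \<le> n" "x = xg n i"
        unfolding G_def using g1 g2 by blast
      then show "x \<in> g ` {1..n}"
      proof cases
        case 1 then show ?thesis using n6 by (auto simp: g_def image_def intro!: bexI[of _ 1])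
      next
        case 2 then show ?thesis using n6 by (auto simp: g_def image_def intro!: bexI[of _ 2])
      next
        case 3 then show ?thesis using xg_eq(3)[OF n4 n6] by (auto simp: g_def image_def intro!: bexI[of _ i])
      qed
    qed
  next
    show "g ` {1..n} \<subseteq> G"
    proof
      fix x assume "x \<in> g ` {1..n}"
      then obtain i where i: "i \<in> {1..n}" "x = g i" by blast
      show "x \<in> G"
      proof (cases "i \<le> 2")
        case True
        then have "i = 1 \<or> i = 2" using i by auto
        then show ?thesis using i g1 g2 by (auto simp: G_def g_def)
      next
        case False
        then have "x = xg n i" using i xg_eq(3)[OF n4 n6, of i] by (simp add: g_def)
        then show ?thesis using False i by (auto simp: G_def)
      qed
    qed
  qed
  have gO: "\<And>i. i \<in> {1..n} \<Longrightarrow> \<exists>j s. j \<in> Omega n \<and> even (i + j) \<and> g i = E n i j s"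
  proof -
    fix i assume i: "i \<in> {1..n}"
    show "\<exists>j s. j \<in> Omega n \<and> even (i + j) \<and> g i = E n i j s"
    proof (cases "i = 1")
      case True then show ?thesis using O1 ev n6
        by (intro exI[of _ "n - 1"] exI[of _ True]) (auto simp: g_def)
    next
      case F: False
      show ?thesis
      proof (cases "i = 2")
        case True then show ?thesis using O1 ev
          by (intro exI[of _ n] exI[of _ True]) (auto simp: g_def)
      next
        case False
        then have "i - 2 \<in> Omega n" "even (i + (i - 2))" using i F by (auto simp: Omega_def)
        then show ?thesis using F False by (auto simp: g_def)
      qed
    qed
  qed
  have GAM: "G \<subseteq> AM n"
  proof
    fix x assume "x \<in> G"
    then obtain i where i: "i \<in> {1..n}" "x = g i" using Gg by blast
    then obtain j s where "j \<in> Omega n" "even (i + j)" "g i = E n i j s" using gO by blast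
    then show "x \<in> AM n" using E_AM[OF n4] i by (simp add: Omega_def)
  qed
  have base: "\<And>x. x \<in> G \<Longrightarrow> x \<in> gen n G" by (rule gen.gen_base)
  have top1: "E n 1 (n - 1) True \<in> gen n G" using base[of "pmult (xg n 1) (hg n (n - 1))"] g1 by (simp add: G_def)
  have top2: "E n 2 n True \<in> gen n G" using base[of "pmult (xg n 2) (hg n n)"] g2 by (simp add: G_def)
  have steps: "\<And>i. 3 \<le> i \<Longrightarrow> i \<le> n \<Longrightarrow> E n i (i - 2) False \<in> gen n G"
  proof -
    fix i assume h: "3 \<le> i" "i \<le> n"
    have "xg n i \<in> G" using h unfolding G_def by blast
    then have "xg n i \<in> gen n G" by (rule base)
    then show "E n i (i - 2) False \<in> gen n G" using xg_eq(3)[OF n4 n6 h] by simp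
  qed
  have EALL: "\<And>i j s. i \<in> Omega n \<Longrightarrow> j \<in> Omega n \<Longrightarrow> even (i + j) \<Longrightarrow> E n i j s \<in> gen n G"
  proof -
    fix i j s assume i: "i \<in> Omega n" and j: "j \<in> Omega n" and p: "even (i + j)"
    show "E n i j s \<in> gen n G"
    proof (cases "odd i")
      case True
      have c: "1 \<le> i" "i \<le> n - 1" "1 \<le> j" "j \<le> n - 1" "even (i + 1)" "even (j + 1)"
        using i j p True ev by (auto simp: Omega_def) presburger+
      show ?thesis
        by (rule chain[where b=1 and t="n - 1" and G=G, OF n4 n6 _ _ _ _ c]) (use top1 steps n6 in auto)
    next
      case False
      have c: "2 \<le> i" "i \<le> n" "2 \<le> j" "j \<le> n" "even (i + 2)" "even (j + 2)"
        using i j p False ev by (auto simp: Omega_def)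
      show ?thesis
        by (rule chain[where b=2 and t="n" and G=G, OF n4 n6 _ _ _ _ c]) (use top2 steps n6 in auto)
    qed
  qed
  interpret gctx n G using n4 n6 GAM EALL by unfold_locales auto
  have geq: "gen n G = AM n" by (rule gen_eq)
  have inj: "inj_on g {1..n}"
  proof (rule inj_onI)
    fix i i' assume i: "i \<in> {1..n}" and i': "i' \<in> {1..n}" and e: "g i = g i'"
    obtain j s where "j \<in> Omega n" "g i = E n i j s" using gO[OF i] by blast
    then have "dom (g i) = Xs n i" using E_props i by (simp add: Omega_def)
    moreover obtain j' s' where "j' \<in> Omega n" "g i' = E n i' j' s'" using gO[OF i'] by blast
    then have "dom (g i') = Xs n i'" using E_props i' by (simp add: Omega_def)
    ultimately have "Xs n i = Xs n i'" using e by simp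
    show "i = i'"
    proof (rule ccontr)
      assume "i \<noteq> i'"
      then have "i \<in> Xs n i'" using i by (simp add: Xs_def Omega_def)
      then have "i \<in> Xs n i" using \<open>Xs n i = Xs n i'\<close> by simp
      then show False by (simp add: Xs_def)
    qed
  qed
  have cG: "card G = n" using card_image[OF inj] Gg by simp
  have finG: "finite G" using Gg by simp
  have lb: "\<forall>A. A \<subseteq> AM n \<and> gen n A = AM n \<longrightarrow> card G \<le> card A"
    using lower_bound[OF n4] cG by auto
  have rk: "rank n (AM n) = n"
    unfolding rank_def
  proof (rule Least_equality)
    show "\<exists>A\<subseteq>AM n. finite A \<and> card A = n \<and> gen n A = AM n" using GAM finG cG geq by blast
  next
    fix k assume "\<exists>A\<subseteq>AM n. finite A \<and> card A = k \<and> gen n A = AM n"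
    then show "n \<le> k" using lower_bound[OF n4] by blast
  qed
  show ?thesis using GAM geq lb cG rk by blast
qed


end
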